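(* Let $\mathfrak{n}$ be the real $7$-dimensional Lie algebra with basis $e_1,\dots,e_7$ whose nonzero brackets (up to antisymmetry) are $[e_1,e_2]=e_3$, $[e_1,e_3]=e_5$, $[e_1,e_4]=e_6$, $[e_1,e_5]=e_7$, $[e_1,e_6]=e_7$, $[e_2,e_3]=e_7$. Then $\mathfrak{n}$ is an Einstein nilradical.
   Context: A real nilpotent Lie algebra $\mathfrak{n}$ is called an Einstein nilradical if it admits an inner product such that the left-invariant Riemannian metric it defines on the simply connected nilpotent Lie group with Lie algebra $\mathfrak{n}$ is a nilsoliton, i.e. its Ricci operator satisfies $\mathrm{Ric}=c\,\mathrm{Id}+D$ for some $c\in\mathbb{R}$ and some derivation $D$ of $\mathfrak{n}$. Brackets of basis elements not listed are zero. *)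

theory Defs
  imports "HOL-Analysis.Analysis" "HOL-Library.Numeral_Type"
begin

definition lie_algebra :: "(real^'n \<Rightarrow> real^'n \<Rightarrow> real^'n) \<Rightarrow> bool" where
  "lie_algebra br \<longleftrightarrow> bilinear br \<and> (\<forall>x. br x x = 0) \<and>
     (\<forall>x y z. br x (br y z) + br y (br z x) + br z (br x y) = 0)"

fun nested_br :: "(real^'n \<Rightarrow> real^'n \<Rightarrow> real^'n) \<Rightarrow> (real^'n) list \<Rightarrow> real^'n \<Rightarrow> real^'n" where
  "nested_br br [] y = y"
| "nested_br br (x # xs) y = br x (nested_br br xs y)"

text \<open>Nilpotent: some term of the lower central series vanishes, i.e. all
  iterated brackets of length k+1 vanish for some k.\<close>
definition nilpotent_lie :: "(real^'n \<Rightarrow> real^'n \<Rightarrow> real^'n) \<Rightarrow> bool" where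
  "nilpotent_lie br \<longleftrightarrow> (\<exists>k. \<forall>xs y. length xs = k \<longrightarrow> nested_br br xs y = 0)"

definition ip :: "real^'n^'n \<Rightarrow> real^'n \<Rightarrow> real^'n \<Rightarrow> real" where
  "ip G x y = x \<bullet> (G *v y)"

definition inner_product_matrix :: "real^'n^'n \<Rightarrow> bool" where
  "inner_product_matrix G \<longleftrightarrow> transpose G = G \<and> (\<forall>x. x \<noteq> 0 \<longrightarrow> ip G x x > 0)"

text \<open>Levi-Civita connection of the left-invariant metric on left-invariant fields (Koszul formula).\<close>
definition levi_civita :: "real^'n^'n \<Rightarrow> (real^'n \<Rightarrow> real^'n \<Rightarrow> real^'n) \<Rightarrow> real^'n \<Rightarrow> real^'n \<Rightarrow> real^'n" where
  "levi_civita G br x y = (THE v. \<forall>z. 2 * ip G v z = ip G (br x y) z - ip G (br y z) x + ip G (br z x) y)"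

definition curv :: "real^'n^'n \<Rightarrow> (real^'n \<Rightarrow> real^'n \<Rightarrow> real^'n) \<Rightarrow> real^'n \<Rightarrow> real^'n \<Rightarrow> real^'n \<Rightarrow> real^'n" where
  "curv G br x y z = levi_civita G br x (levi_civita G br y z) - levi_civita G br y (levi_civita G br x z)
     - levi_civita G br (br x y) z"

definition ric :: "real^'n^'n \<Rightarrow> (real^'n \<Rightarrow> real^'n \<Rightarrow> real^'n) \<Rightarrow> real^'n \<Rightarrow> real^'n \<Rightarrow> real" where
  "ric G br x y = (\<Sum>i\<in>UNIV. curv G br (axis i 1) x y $ i)"

definition ricci_op :: "real^'n^'n \<Rightarrow> (real^'n \<Rightarrow> real^'n \<Rightarrow> real^'n) \<Rightarrow> real^'n \<Rightarrow> real^'n" where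
  "ricci_op G br x = (THE v. \<forall>y. ip G v y = ric G br x y)"

definition lie_derivation :: "(real^'n \<Rightarrow> real^'n \<Rightarrow> real^'n) \<Rightarrow> real^'n^'n \<Rightarrow> bool" where
  "lie_derivation br D \<longleftrightarrow> (\<forall>x y. D *v br x y = br (D *v x) y + br x (D *v y))"

definition nilsoliton :: "real^'n^'n \<Rightarrow> (real^'n \<Rightarrow> real^'n \<Rightarrow> real^'n) \<Rightarrow> bool" where
  "nilsoliton G br \<longleftrightarrow> (\<exists>(c::real) D. lie_derivation br D \<and> (\<forall>x. ricci_op G br x = c *\<^sub>R x + D *v x))"

definition einstein_nilradical :: "(real^'n \<Rightarrow> real^'n \<Rightarrow> real^'n) \<Rightarrow> bool" where
  "einstein_nilradical br \<longleftrightarrow> lie_algebra br \<and> nilpotent_lie br \<and>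
     (\<exists>G. inner_product_matrix G \<and> nilsoliton G br)"

text \<open>The 7-dimensional algebra; basis e_1..e_7 = axis 1 .. axis 7 of index type 7
  (note: (7::7) = 0, which is distinct from 1..6).\<close>
definition br7 :: "real^7 \<Rightarrow> real^7 \<Rightarrow> real^7" where
  "br7 x y = (let a = (\<lambda>i j. x$i * y$j - x$j * y$i) in
     (\<chi> k. if k = 3 then a 1 2
           else if k = 5 then a 1 3
           else if k = 6 then a 1 4
           else if k = 7 then a 1 5 + a 1 6 + a 2 3
           else 0))"

end

theory Submission
  imports Defs
begin

lemma exhaust_7: fixes x :: 7 shows "x = 1 \<or> x = 2 \<or> x = 3 \<or> x = 4 \<or> x = 5 \<or> x = 6 \<or> x = 7"
proof (induct x)
  case (of_int z)
  then have "z = 0 \<or> z = 1 \<or> z = 2 \<or> z = 3 \<or> z = 4 \<or> z = 5 \<or> z = 6" by fastforce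
  then show ?case by auto
qed

lemma forall_7: "(\<forall>i::7. P i) \<longleftrightarrow> P 1 \<and> P 2 \<and> P 3 \<and> P 4 \<and> P 5 \<and> P 6 \<and> P 7"
  by (metis exhaust_7)

lemma UNIV_7: "(UNIV::7 set) = {1,2,3,4,5,6,7}" using exhaust_7 by auto

lemma sum_7: "sum f (UNIV::7 set) = f 1 + f 2 + f 3 + f 4 + f 5 + f 6 + f 7"
  unfolding UNIV_7 by (simp add: ac_simps)

lemma vec7_eq: "(v::real^7) = w \<longleftrightarrow> v$1 = w$1 \<and> v$2 = w$2 \<and> v$3 = w$3 \<and> v$4 = w$4 \<and> v$5 = w$5 \<and> v$6 = w$6 \<and> v$7 = w$7"
  unfolding vec_eq_iff forall_7 by simp

lemma br7_c:
  "br7 x y $ 1 = 0" "br7 x y $ 2 = 0" "br7 x y $ 3 = x$1 * y$2 - x$2 * y$1"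
  "br7 x y $ 4 = 0" "br7 x y $ 5 = x$1 * y$3 - x$3 * y$1" "br7 x y $ 6 = x$1 * y$4 - x$4 * y$1"
  "br7 x y $ 7 = (x$1 * y$5 - x$5 * y$1) + (x$1 * y$6 - x$6 * y$1) + (x$2 * y$3 - x$3 * y$2)"
  by (simp_all add: br7_def Let_def)

definition G7 :: "real^7^7" where
  "G7 = (\<chi> i j. if i = 1 \<and> j = 1 then 1 else if i = 2 \<and> j = 2 then 10
     else if (i = 3 \<and> j = 3) \<or> (i = 4 \<and> j = 4) then 180
     else if (i = 3 \<and> j = 4) \<or> (i = 4 \<and> j = 3) then 60
     else if (i = 5 \<and> j = 5) \<or> (i = 6 \<and> j = 6) then 2880
     else if (i = 5 \<and> j = 6) \<or> (i = 6 \<and> j = 5) then 1920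
     else if i = 7 \<and> j = 7 then 28800 else 0)"

lemma ipG: "ip G7 x y = x$1*y$1 + 10*x$2*y$2 + 180*x$3*y$3 + 60*x$3*y$4 + 60*x$4*y$3 + 180*x$4*y$4
   + 2880*x$5*y$5 + 1920*x$5*y$6 + 1920*x$6*y$5 + 2880*x$6*y$6 + 28800*x$7*y$7"
  unfolding ip_def inner_vec_def matrix_vector_mult_def G7_def sum_7
  by (simp add: algebra_simps)

definition LC7 :: "real^7 \<Rightarrow> real^7 \<Rightarrow> real^7" where
  "LC7 x y = (\<chi> k. if k = 1 then (90) * x$2 * y$3 + (30) * x$2 * y$4 + (90) * x$3 * y$2 + (1440) * x$3 * y$5 + (960) * x$3 * y$6 + (30) * x$4 * y$2 + (960) * x$4 * y$5 + (1440) * x$4 * y$6 + (1440) * x$5 * y$3 + (960) * x$5 * y$4 + (14400) * x$5 * y$7 + (960) * x$6 * y$3 + (1440) * x$6 * y$4 + (14400) * x$6 * y$7 + (14400) * x$7 * y$5 + (14400) * x$7 * y$6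
 else if k = 2 then (-9) * x$1 * y$3 + (-3) * x$1 * y$4 + (-9) * x$3 * y$1 + (1440) * x$3 * y$7 + (-3) * x$4 * y$1 + (1440) * x$7 * y$3
 else if k = 3 then (1/2) * x$1 * y$2 + (-7) * x$1 * y$5 + (-3) * x$1 * y$6 + (-1/2) * x$2 * y$1 + (-90) * x$2 * y$7 + (-7) * x$5 * y$1 + (-3) * x$6 * y$1 + (-90) * x$7 * y$2
 else if k = 4 then (-3) * x$1 * y$5 + (-7) * x$1 * y$6 + (30) * x$2 * y$7 + (-3) * x$5 * y$1 + (-7) * x$6 * y$1 + (30) * x$7 * y$2
 else if k = 5 then (1/2) * x$1 * y$3 + (-3) * x$1 * y$7 + (-1/2) * x$3 * y$1 + (-3) * x$7 * y$1
 else if k = 6 then (1/2) * x$1 * y$4 + (-3) * x$1 * y$7 + (-1/2) * x$4 * y$1 + (-3) * x$7 * y$1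
 else (1/2) * x$1 * y$5 + (1/2) * x$1 * y$6 + (1/2) * x$2 * y$3 + (-1/2) * x$3 * y$2 + (-1/2) * x$5 * y$1 + (-1/2) * x$6 * y$1)"

lemma LC7_c: "LC7 x y $ 1 = (90) * x$2 * y$3 + (30) * x$2 * y$4 + (90) * x$3 * y$2 + (1440) * x$3 * y$5 + (960) * x$3 * y$6 + (30) * x$4 * y$2 + (960) * x$4 * y$5 + (1440) * x$4 * y$6 + (1440) * x$5 * y$3 + (960) * x$5 * y$4 + (14400) * x$5 * y$7 + (960) * x$6 * y$3 + (1440) * x$6 * y$4 + (14400) * x$6 * y$7 + (14400) * x$7 * y$5 + (14400) * x$7 * y$6" "LC7 x y $ 2 = (-9) * x$1 * y$3 + (-3) * x$1 * y$4 + (-9) * x$3 * y$1 + (1440) * x$3 * y$7 + (-3) * x$4 * y$1 + (1440) * x$7 * y$3" "LC7 x y $ 3 = (1/2) * x$1 * y$2 + (-7) * x$1 * y$5 + (-3) * x$1 * y$6 + (-1/2) * x$2 * y$1 + (-90) * x$2 * y$7 + (-7) * x$5 * y$1 + (-3) * x$6 * y$1 + (-90) * x$7 * y$2" "LC7 x y $ 4 = (-3) * x$1 * y$5 + (-7) * x$1 * y$6 + (30) * x$2 * y$7 + (-3) * x$5 * y$1 + (-7) * x$6 * y$1 + (30) * x$7 * y$2"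
   "LC7 x y $ 5 = (1/2) * x$1 * y$3 + (-3) * x$1 * y$7 + (-1/2) * x$3 * y$1 + (-3) * x$7 * y$1" "LC7 x y $ 6 = (1/2) * x$1 * y$4 + (-3) * x$1 * y$7 + (-1/2) * x$4 * y$1 + (-3) * x$7 * y$1" "LC7 x y $ 7 = (1/2) * x$1 * y$5 + (1/2) * x$1 * y$6 + (1/2) * x$2 * y$3 + (-1/2) * x$3 * y$2 + (-1/2) * x$5 * y$1 + (-1/2) * x$6 * y$1"
  by (simp_all add: LC7_def)

lemma koszul: "2 * ip G7 (LC7 x y) z = ip G7 (br7 x y) z - ip G7 (br7 y z) x + ip G7 (br7 z x) y"
  unfolding ipG LC7_c br7_c by (simp add: algebra_simps)

lemma ip_diff_left: "ip G v z - ip G w z = ip G (v - w) z"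
  unfolding ip_def by (simp add: inner_diff_left)

lemma ipG_sq: "ip G7 x x = (x$1)^2 + 10*(x$2)^2 + 60*(x$3 + x$4)^2 + 120*(x$3)^2 + 120*(x$4)^2
   + 1920*(x$5 + x$6)^2 + 960*(x$5)^2 + 960*(x$6)^2 + 28800*(x$7)^2"
  unfolding ipG by (simp add: power2_eq_square algebra_simps)

lemma ipG_pos: assumes "x \<noteq> 0" shows "ip G7 x x > 0"
proof -
  have "\<exists>i. x$i \<noteq> 0" using assms by (simp add: vec_eq_iff)
  then have nz: "x$1 \<noteq> 0 \<or> x$2 \<noteq> 0 \<or> x$3 \<noteq> 0 \<or> x$4 \<noteq> 0 \<or> x$5 \<noteq> 0 \<or> x$6 \<noteq> 0 \<or> x$7 \<noteq> 0"
    by (metis exhaust_7)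
  have s: "(x$1)^2 \<ge> 0" "(x$2)^2 \<ge> 0" "(x$3 + x$4)^2 \<ge> 0" "(x$3)^2 \<ge> 0" "(x$4)^2 \<ge> 0"
    "(x$5 + x$6)^2 \<ge> 0" "(x$5)^2 \<ge> 0" "(x$6)^2 \<ge> 0" "(x$7)^2 \<ge> 0" by simp_all
  from nz have "(x$1)^2 > 0 \<or> (x$2)^2 > 0 \<or> (x$3)^2 > 0 \<or> (x$4)^2 > 0 \<or> (x$5)^2 > 0 \<or> (x$6)^2 > 0 \<or> (x$7)^2 > 0"
    by auto
  then show ?thesis unfolding ipG_sq using s by linarith
qed

lemma ipG_uniq: assumes "\<forall>z. ip G7 v z = ip G7 w z" shows "v = w"
proof (rule ccontr)
  assume "v \<noteq> w"
  then have "ip G7 (v - w) (v - w) > 0" by (intro ipG_pos) simp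
  moreover have "ip G7 (v - w) (v - w) = 0" using assms ip_diff_left[of G7 v "v - w" w] by simp
  ultimately show False by simp
qed

lemma levi7: "levi_civita G7 br7 x y = LC7 x y"
  unfolding levi_civita_def
proof (rule the_equality)
  show "\<forall>z. 2 * ip G7 (LC7 x y) z = ip G7 (br7 x y) z - ip G7 (br7 y z) x + ip G7 (br7 z x) y"
    using koszul by blast
next
  fix v assume "\<forall>z. 2 * ip G7 v z = ip G7 (br7 x y) z - ip G7 (br7 y z) x + ip G7 (br7 z x) y"
  then have "\<forall>z. ip G7 v z = ip G7 (LC7 x y) z" using koszul by (metis mult_cancel_left zero_neq_numeral)
  then show "v = LC7 x y" by (rule ipG_uniq)
qed

definition RV :: "real^7 \<Rightarrow> real^7" where
  "RV x = (\<chi> i. (if i = 1 then -29 else if i = 2 then -18 else if i = 3 then -7 else if i = 4 then -7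
     else if i = 5 then 4 else if i = 6 then 4 else 15) * x$i)"

lemma RV_c: "RV x $ 1 = -29 * x$1" "RV x $ 2 = -18 * x$2" "RV x $ 3 = -7 * x$3" "RV x $ 4 = -7 * x$4"
  "RV x $ 5 = 4 * x$5" "RV x $ 6 = 4 * x$6" "RV x $ 7 = 15 * x$7"
  by (simp_all add: RV_def)

lemma axis_c: "axis (i::7) (1::real) $ j = (if j = i then 1 else 0)" by (simp add: axis_def)

lemma ric7: "ric G7 br7 x y = ip G7 (RV x) y"
  unfolding ric_def curv_def levi7 sum_7 ipG RV_c
  by (simp add: LC7_c br7_c axis_c algebra_simps)


lemma ricci7: "ricci_op G7 br7 x = RV x"
  unfolding ricci_op_def
proof (rule the_equality)
  show "\<forall>y. ip G7 (RV x) y = ric G7 br7 x y" using ric7 by simp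
next
  fix v assume "\<forall>y. ip G7 v y = ric G7 br7 x y"
  then show "v = RV x" using ric7 by (intro ipG_uniq) simp
qed



definition D7 :: "real^7^7" where
  "D7 = (\<chi> i j. if i = j then (if i = 1 then 11 else if i = 2 then 22 else if i = 3 then 33 else if i = 4 then 33
     else if i = 5 then 44 else if i = 6 then 44 else 55) else 0)"

lemma D7_c: "(D7 *v x) $ 1 = 11 * x$1" "(D7 *v x) $ 2 = 22 * x$2" "(D7 *v x) $ 3 = 33 * x$3"
  "(D7 *v x) $ 4 = 33 * x$4" "(D7 *v x) $ 5 = 44 * x$5" "(D7 *v x) $ 6 = 44 * x$6" "(D7 *v x) $ 7 = 55 * x$7"
  unfolding matrix_vector_mult_def D7_def sum_7 by simp_all

lemma der7: "lie_derivation br7 D7"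
  unfolding lie_derivation_def vec7_eq by (simp add: D7_c br7_c algebra_simps)

lemma RV_eq: "RV x = (-40) *\<^sub>R x + D7 *v x"
  unfolding vec7_eq by (simp add: RV_c D7_c)

lemma ipm7: "inner_product_matrix G7"
  unfolding inner_product_matrix_def
proof
  show "transpose G7 = G7" unfolding transpose_def G7_def vec_eq_iff by (simp add: conj_commute)
  show "\<forall>x. x \<noteq> 0 \<longrightarrow> 0 < ip G7 x x" using ipG_pos by blast
qed
lemma lin1: "linear (\<lambda>y. br7 x y)"
  by (rule linearI) (simp_all add: vec7_eq br7_c algebra_simps)
lemma lin2: "linear (\<lambda>x. br7 x y)"
  by (rule linearI) (simp_all add: vec7_eq br7_c algebra_simps)

lemma jac7: "br7 x (br7 y z) + br7 y (br7 z x) + br7 z (br7 x y) = 0"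
  unfolding vec7_eq by (simp add: br7_c algebra_simps)
lemma lie7: "lie_algebra br7"
  unfolding lie_algebra_def bilinear_def
  using lin1 lin2 jac7 by (simp add: vec7_eq br7_c)
lemma nil7: "nilpotent_lie br7"
  unfolding nilpotent_lie_def
proof (intro exI allI impI)
  fix xs :: "(real^7) list" and y :: "real^7"
  assume "length xs = 4"
  then obtain a b c d where "xs = [a, b, c, d]"
    by (auto simp: numeral_eq_Suc length_Suc_conv)
  then show "nested_br br7 xs y = 0"
    by (simp add: vec7_eq br7_c)
qed

theorem mainTheorem15:
  shows "einstein_nilradical br7"
  unfolding einstein_nilradical_def nilsoliton_def
  using lie7 nil7 ipm7 der7 ricci7 RV_eq by (intro conjI exI[of _ G7] exI[of _ "-40::real"] exI[of _ D7]) auto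

end
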